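(* Let $E\subseteq D$ be a subspace of the Fischer space $\Pi(D)$, i.e., $d^e\in E$ for all $d,e\in E$. Then the algebra $\mathcal{A}(D)/\mathcal{V}(D)$ contains a subalgebra that has a quotient isomorphic to $\mathcal{A}(E)/\mathcal{V}(E)$.
   Context: Let $G$ be a group generated by a conjugacy class $D$ of involutions such that for all $d,e\in D$ the order of $de$ is $1$, $2$ or $3$. The Fischer space $\Pi(D)$ has point set $D$ and lines the triples $\{d,e,d^e\}$ with $d,e\in D$ non-commuting. $\mathcal{A}(D)$ is the $\mathbb{F}_2$-vector space with basis $D$ (finite subsets under symmetric difference), with bilinear product determined by $d*e=d+e+f$ if $\{d,e,f\}$ is a line and $d*e=0$ otherwise. The bilinear form is determined by $\langle d,e\rangle=1$ if $d,e$ do not commute and $0$ otherwise, and $\mathcal{V}(D)$ is its radical. For the subspace $E$, $\mathcal{A}(E)$ is the subalgebra of $\mathcal{A}(D)$ spanned by $E$ (the same construction applied to $E$ and the lines contained in $E$), and $\mathcal{V}(E)$ is the radical of the restriction of $\langle\cdot,\cdot\rangle$ to $\mathcal{A}(E)$. *)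

theory Defs
  imports "HOL-Algebra.Multiplicative_Group" "HOL-Algebra.Generated_Groups"
begin

(* A (not necessarily associative) algebra over F_2, given by carrier, addition,
   multiplication and zero. *)
record 'b f2alg =
  acar :: "'b set"
  aadd :: "'b \<Rightarrow> 'b \<Rightarrow> 'b"
  amul :: "'b \<Rightarrow> 'b \<Rightarrow> 'b"
  azero :: "'b"

definition symdiff :: "'a set \<Rightarrow> 'a set \<Rightarrow> 'a set" where
  "symdiff A B = (A - B) \<union> (B - A)"

definition conjg :: "('g, 'm) monoid_scheme \<Rightarrow> 'g \<Rightarrow> 'g \<Rightarrow> 'g" where
  "conjg G d e = inv\<^bsub>G\<^esub> e \<otimes>\<^bsub>G\<^esub> d \<otimes>\<^bsub>G\<^esub> e"

definition commute :: "('g, 'm) monoid_scheme \<Rightarrow> 'g \<Rightarrow> 'g \<Rightarrow> bool" where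
  "commute G d e \<longleftrightarrow> d \<otimes>\<^bsub>G\<^esub> e = e \<otimes>\<^bsub>G\<^esub> d"

(* product of basis elements: d*e = d+e+d^e (as a set {d,e,d^e}) if {d,e,d^e} is a line,
   i.e. d,e do not commute; 0 otherwise *)
definition basis_prod :: "('g, 'm) monoid_scheme \<Rightarrow> 'g \<Rightarrow> 'g \<Rightarrow> 'g set" where
  "basis_prod G d e = (if commute G d e then {} else {d, e, conjg G d e})"

(* bilinear extension over F_2: coefficient of x is the parity of the number of
   pairs (d,e) \<in> S \<times> T whose basis product contains x *)
definition fprod :: "('g, 'm) monoid_scheme \<Rightarrow> 'g set \<Rightarrow> 'g set \<Rightarrow> 'g set" where
  "fprod G S T = {x. odd (card {(d, e). d \<in> S \<and> e \<in> T \<and> x \<in> basis_prod G d e})}"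

(* bilinear form (value in F_2, True = 1) *)
definition fform :: "('g, 'm) monoid_scheme \<Rightarrow> 'g set \<Rightarrow> 'g set \<Rightarrow> bool" where
  "fform G S T = odd (card {(d, e). d \<in> S \<and> e \<in> T \<and> \<not> commute G d e})"

definition fischer_alg :: "('g, 'm) monoid_scheme \<Rightarrow> 'g set \<Rightarrow> 'g set f2alg" where
  "fischer_alg G X = \<lparr> acar = {S. S \<subseteq> X \<and> finite S}, aadd = symdiff,
                       amul = fprod G, azero = {} \<rparr>"

definition fischer_rad :: "('g, 'm) monoid_scheme \<Rightarrow> 'g set \<Rightarrow> 'g set set" where
  "fischer_rad G X = {S \<in> acar (fischer_alg G X). \<forall>T \<in> acar (fischer_alg G X). \<not> fform G S T}"

definition restrict_alg :: "'b f2alg \<Rightarrow> 'b set \<Rightarrow> 'b f2alg" where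
  "restrict_alg A B = A\<lparr> acar := B \<rparr>"

definition subalgebra :: "'b set \<Rightarrow> 'b f2alg \<Rightarrow> bool" where
  "subalgebra B A \<longleftrightarrow> B \<subseteq> acar A \<and> azero A \<in> B \<and>
     (\<forall>x\<in>B. \<forall>y\<in>B. aadd A x y \<in> B \<and> amul A x y \<in> B)"

definition alg_ideal :: "'b set \<Rightarrow> 'b f2alg \<Rightarrow> bool" where
  "alg_ideal I A \<longleftrightarrow> I \<subseteq> acar A \<and> azero A \<in> I \<and>
     (\<forall>x\<in>I. \<forall>y\<in>I. aadd A x y \<in> I) \<and>
     (\<forall>x\<in>I. \<forall>a\<in>acar A. amul A a x \<in> I \<and> amul A x a \<in> I)"

(* coset x + I (characteristic 2, so x + I = {x + i | i \<in> I}) *)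
definition coset :: "'b f2alg \<Rightarrow> 'b set \<Rightarrow> 'b \<Rightarrow> 'b set" where
  "coset A I x = (\<lambda>i. aadd A x i) ` I"

(* quotient algebra A/I; operations via representatives (well defined for ideals) *)
definition quot_alg :: "'b f2alg \<Rightarrow> 'b set \<Rightarrow> 'b set f2alg" where
  "quot_alg A I = \<lparr> acar = coset A I ` acar A,
     aadd = (\<lambda>C1 C2. coset A I (aadd A (SOME x. x \<in> C1) (SOME y. y \<in> C2))),
     amul = (\<lambda>C1 C2. coset A I (amul A (SOME x. x \<in> C1) (SOME y. y \<in> C2))),
     azero = coset A I (azero A) \<rparr>"

definition alg_iso :: "'b f2alg \<Rightarrow> 'c f2alg \<Rightarrow> bool" where
  "alg_iso A A' \<longleftrightarrow> (\<exists>f. bij_betw f (acar A) (acar A') \<and>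
     (\<forall>x\<in>acar A. \<forall>y\<in>acar A. f (aadd A x y) = aadd A' (f x) (f y) \<and>
                               f (amul A x y) = amul A' (f x) (f y)))"

definition fischer_setting :: "('g, 'm) monoid_scheme \<Rightarrow> 'g set \<Rightarrow> bool" where
  "fischer_setting G D \<longleftrightarrow> group G \<and>
     (\<exists>x\<in>carrier G. x \<noteq> \<one>\<^bsub>G\<^esub> \<and> x \<otimes>\<^bsub>G\<^esub> x = \<one>\<^bsub>G\<^esub> \<and>
        D = {inv\<^bsub>G\<^esub> g \<otimes>\<^bsub>G\<^esub> x \<otimes>\<^bsub>G\<^esub> g | g. g \<in> carrier G}) \<and>
     generate G D = carrier G \<and>
     (\<forall>d\<in>D. \<forall>e\<in>D. group.ord G (d \<otimes>\<^bsub>G\<^esub> e) \<in> {1, 2, 3})"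

end

theory Submission
  imports Defs "HOL-Library.Z2"
begin

declare add_bit_eq_xor[simp del] mult_bit_eq_and[simp del] sum_of_bool_eq[simp del]

lemma bit_add_self[simp]: "(x::bit) + x = 0"
  by (cases x) auto

lemma of_nat_bit: "(of_nat n :: bit) = of_bool (odd n)"
  by (induction n) auto

lemma bit_cases_eq1: "(x::bit) = of_bool (x = 1)"
  by (cases x) auto

lemma card_pairs_bit:
  assumes "finite S" "finite T"
  shows "(of_nat (card {(d, e). d \<in> S \<and> e \<in> T \<and> P d e}) :: bit)
         = (\<Sum>d\<in>S. \<Sum>e\<in>T. of_bool (P d e))"
proof -
  have eq: "{(d, e). d \<in> S \<and> e \<in> T \<and> P d e} = Set.filter (\<lambda>(d,e). P d e) (S \<times> T)"
    by auto
  have "(of_nat (card (Set.filter (\<lambda>(d,e). P d e) (S \<times> T))) :: bit)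
        = (\<Sum>p\<in>S \<times> T. of_bool (case p of (d,e) \<Rightarrow> P d e))"
    using assms by (subst sum_of_bool_eq) (auto intro!: arg_cong[where f="\<lambda>X. of_nat (card X)"])
  also have "\<dots> = (\<Sum>d\<in>S. \<Sum>e\<in>T. of_bool (P d e))"
    by (simp add: sum.cartesian_product case_prod_beta)
  finally show ?thesis using eq by simp
qed

lemma odd_card_pairs:
  assumes "finite S" "finite T"
  shows "of_bool (odd (card {(d, e). d \<in> S \<and> e \<in> T \<and> P d e})) = (\<Sum>d\<in>S. \<Sum>e\<in>T. (of_bool (P d e)::bit))"
  using card_pairs_bit[OF assms, of P] by (simp add: of_nat_bit)

lemma ind_fprod:
  assumes "finite S" "finite T"
  shows "(of_bool (x \<in> fprod G S T) :: bit) = (\<Sum>d\<in>S. \<Sum>e\<in>T. of_bool (x \<in> basis_prod G d e))"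
  unfolding fprod_def using odd_card_pairs[OF assms] by simp

lemma ind_fform:
  assumes "finite S" "finite T"
  shows "(of_bool (fform G S T) :: bit) = (\<Sum>d\<in>S. \<Sum>e\<in>T. of_bool (\<not> commute G d e))"
  unfolding fform_def using odd_card_pairs[OF assms] by simp

lemma ind_symdiff: "(of_bool (x \<in> symdiff A B) :: bit) = of_bool (x \<in> A) + of_bool (x \<in> B)"
  unfolding symdiff_def by auto

lemma set_eq_bit: "(\<And>x. (of_bool (x \<in> A) :: bit) = of_bool (x \<in> B)) \<Longrightarrow> A = B"
  by (metis (full_types) of_bool_eq_iff subsetI subset_antisym)

lemma sum_subset_ind:
  assumes "finite X" "A \<subseteq> X"
  shows "sum g A = (\<Sum>x\<in>X. (of_bool (x \<in> A) :: bit) * g x)"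
proof -
  have "(\<Sum>x\<in>X. (of_bool (x \<in> A) :: bit) * g x) = (\<Sum>x\<in>X. if x \<in> A then g x else 0)"
    by (intro sum.cong) auto
  also have "\<dots> = sum g (X \<inter> A)" using assms(1) by (simp add: sum.inter_restrict)
  also have "X \<inter> A = A" using assms by auto
  finally show ?thesis by simp
qed

lemma sum_symdiff:
  assumes "finite A" "finite B"
  shows "sum g (symdiff A B) = sum g A + (sum g B :: bit)"
proof -
  have f: "finite (A \<union> B)" using assms by auto
  have s: "symdiff A B \<subseteq> A \<union> B" by (auto simp: symdiff_def)
  have "sum g (symdiff A B) = (\<Sum>x\<in>A \<union> B. (of_bool (x \<in> symdiff A B) :: bit) * g x)"
    by (rule sum_subset_ind[OF f s])
  also have "\<dots> = (\<Sum>x\<in>A \<union> B. of_bool (x \<in> A) * g x) + (\<Sum>x\<in>A \<union> B. of_bool (x \<in> B) * g x)"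
    by (simp add: ind_symdiff distrib_right sum.distrib)
  also have "\<dots> = sum g A + sum g B"
    using sum_subset_ind[OF f, of A g] sum_subset_ind[OF f, of B g] by simp
  finally show ?thesis .
qed

lemma finite_bp[simp]: "finite (basis_prod G d e)"
  by (simp add: basis_prod_def)

lemma fprod_sub: "fprod G S T \<subseteq> (\<Union>d\<in>S. \<Union>e\<in>T. basis_prod G d e)"
proof
  fix x assume "x \<in> fprod G S T"
  then have "odd (card {(d, e). d \<in> S \<and> e \<in> T \<and> x \<in> basis_prod G d e})"
    by (simp add: fprod_def)
  then have "{(d, e). d \<in> S \<and> e \<in> T \<and> x \<in> basis_prod G d e} \<noteq> {}" by (metis card.empty odd_card_imp_not_empty)
  then show "x \<in> (\<Union>d\<in>S. \<Union>e\<in>T. basis_prod G d e)" by auto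
qed

lemma finite_fprod[simp]: "finite S \<Longrightarrow> finite T \<Longrightarrow> finite (fprod G S T)"
  by (rule finite_subset[OF fprod_sub]) auto

lemma sum_fprod:
  assumes "finite S" "finite T"
  shows "sum g (fprod G S T) = (\<Sum>d\<in>S. \<Sum>e\<in>T. (sum g (basis_prod G d e) :: bit))"
proof -
  define X where "X = (\<Union>d\<in>S. \<Union>e\<in>T. basis_prod G d e)"
  have fX: "finite X" using assms by (simp add: X_def)
  have "sum g (fprod G S T) = (\<Sum>x\<in>X. (of_bool (x \<in> fprod G S T) :: bit) * g x)"
    by (rule sum_subset_ind[OF fX]) (simp add: X_def fprod_sub)
  also have "\<dots> = (\<Sum>x\<in>X. (\<Sum>d\<in>S. \<Sum>e\<in>T. of_bool (x \<in> basis_prod G d e)) * g x)"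
    by (simp add: ind_fprod[OF assms])
  also have "\<dots> = (\<Sum>x\<in>X. \<Sum>d\<in>S. \<Sum>e\<in>T. of_bool (x \<in> basis_prod G d e) * g x)"
    by (simp add: sum_distrib_right)
  also have "\<dots> = (\<Sum>d\<in>S. \<Sum>e\<in>T. \<Sum>x\<in>X. of_bool (x \<in> basis_prod G d e) * g x)"
    by (subst sum.swap) (simp add: sum.swap[of _ X])
  also have "\<dots> = (\<Sum>d\<in>S. \<Sum>e\<in>T. sum g (basis_prod G d e))"
    by (intro sum.cong refl sum_subset_ind[symmetric] fX) (auto simp: X_def)
  finally show ?thesis .
qed

lemma bit_of_bool_add_iff: "((of_bool a :: bit) = of_bool b + of_bool c) \<longleftrightarrow> (a \<longleftrightarrow> (b \<noteq> c))"
  by (cases a; cases b; cases c) auto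

lemma fprod_symdiff_left:
  assumes "finite S" "finite S'" "finite T"
  shows "fprod G (symdiff S S') T = symdiff (fprod G S T) (fprod G S' T)"
proof (rule set_eq_bit)
  fix x
  have fs: "finite (symdiff S S')" using assms by (simp add: symdiff_def)
  show "(of_bool (x \<in> fprod G (symdiff S S') T) :: bit) = of_bool (x \<in> symdiff (fprod G S T) (fprod G S' T))"
    by (simp add: ind_symdiff ind_fprod assms fs sum_symdiff)
qed

lemma fprod_comm:
  assumes "finite S" "finite T" "\<And>d e. d \<in> S \<Longrightarrow> e \<in> T \<Longrightarrow> basis_prod G d e = basis_prod G e d"
  shows "fprod G S T = fprod G T S"
proof (rule set_eq_bit)
  fix x
  show "(of_bool (x \<in> fprod G S T) :: bit) = of_bool (x \<in> fprod G T S)"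
  proof -
    have "(\<Sum>d\<in>S. \<Sum>e\<in>T. (of_bool (x \<in> basis_prod G d e) :: bit))
        = (\<Sum>d\<in>S. \<Sum>e\<in>T. of_bool (x \<in> basis_prod G e d))"
      using assms(3) by (intro sum.cong refl) auto
    then show ?thesis using assms by (simp add: ind_fprod sum.swap[of _ S])
  qed
qed

lemma fprod_symdiff_right:
  assumes "finite S" "finite T" "finite T'"
  shows "fprod G S (symdiff T T') = symdiff (fprod G S T) (fprod G S T')"
proof (rule set_eq_bit)
  fix x
  have fs: "finite (symdiff T T')" using assms by (simp add: symdiff_def)
  show "(of_bool (x \<in> fprod G S (symdiff T T')) :: bit) = of_bool (x \<in> symdiff (fprod G S T) (fprod G S T'))"
    by (simp add: ind_symdiff ind_fprod assms fs sum_symdiff sum.distrib)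
qed

lemma fform_symdiff_left:
  assumes "finite S" "finite S'" "finite T"
  shows "fform G (symdiff S S') T \<longleftrightarrow> (fform G S T \<noteq> fform G S' T)"
proof -
  have fs: "finite (symdiff S S')" using assms by (simp add: symdiff_def)
  have "(of_bool (fform G (symdiff S S') T) :: bit) = of_bool (fform G S T) + of_bool (fform G S' T)"
    by (simp add: ind_fform assms fs sum_symdiff)
  then show ?thesis by (simp add: bit_of_bool_add_iff)
qed

lemma fform_assoc:
  assumes "finite S" "finite T" "finite U"
    and basis: "\<And>d e u. d \<in> S \<Longrightarrow> e \<in> T \<Longrightarrow> u \<in> U \<Longrightarrow>
       (\<Sum>x\<in>basis_prod G d e. (of_bool (\<not> commute G x u) :: bit))
       = (\<Sum>y\<in>basis_prod G e u. of_bool (\<not> commute G d y))"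
  shows "fform G (fprod G S T) U \<longleftrightarrow> fform G S (fprod G T U)"
proof -
  have "(of_bool (fform G (fprod G S T) U) :: bit)
      = (\<Sum>x\<in>fprod G S T. \<Sum>u\<in>U. of_bool (\<not> commute G x u))"
    by (simp add: ind_fform assms)
  also have "\<dots> = (\<Sum>d\<in>S. \<Sum>e\<in>T. \<Sum>x\<in>basis_prod G d e. \<Sum>u\<in>U. of_bool (\<not> commute G x u))"
    by (rule sum_fprod[OF assms(1,2)])
  also have "\<dots> = (\<Sum>d\<in>S. \<Sum>e\<in>T. \<Sum>u\<in>U. \<Sum>x\<in>basis_prod G d e. of_bool (\<not> commute G x u))"
    by (simp add: sum.swap[of _ "basis_prod G _ _"])
  also have "\<dots> = (\<Sum>d\<in>S. \<Sum>e\<in>T. \<Sum>u\<in>U. \<Sum>y\<in>basis_prod G e u. of_bool (\<not> commute G d y))"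
    by (intro sum.cong refl basis)
  also have "\<dots> = (\<Sum>d\<in>S. \<Sum>y\<in>fprod G T U. of_bool (\<not> commute G d y))"
    by (intro sum.cong refl sum_fprod[OF assms(2,3), symmetric])
  also have "\<dots> = of_bool (fform G S (fprod G T U))"
    by (simp add: ind_fform assms)
  finally show ?thesis by (metis of_bool_eq_iff)
qed

lemma commute_sym: "commute G x y \<longleftrightarrow> commute G y x"
  unfolding commute_def by auto

context group
begin

lemma conjg_carrier[simp]: "x \<in> carrier G \<Longrightarrow> g \<in> carrier G \<Longrightarrow> conjg G x g \<in> carrier G"
  by (simp add: conjg_def)

lemma conjg_mult: "x \<in> carrier G \<Longrightarrow> y \<in> carrier G \<Longrightarrow> g \<in> carrier G \<Longrightarrow>
   conjg G x g \<otimes> conjg G y g = conjg G (x \<otimes> y) g"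
  unfolding conjg_def by (simp add: m_assoc[symmetric]) (simp add: m_assoc)

lemma conjg_inj: "x \<in> carrier G \<Longrightarrow> y \<in> carrier G \<Longrightarrow> g \<in> carrier G \<Longrightarrow>
   conjg G x g = conjg G y g \<longleftrightarrow> x = y"
  unfolding conjg_def by (simp add: m_assoc)

lemma commute_conjg_iff: "x \<in> carrier G \<Longrightarrow> y \<in> carrier G \<Longrightarrow> g \<in> carrier G \<Longrightarrow>
   commute G (conjg G x g) (conjg G y g) \<longleftrightarrow> commute G x y"
  unfolding commute_def by (simp add: conjg_mult conjg_inj)

lemma conjg_self_iff: "x \<in> carrier G \<Longrightarrow> g \<in> carrier G \<Longrightarrow> conjg G x g = x \<longleftrightarrow> commute G x g"
  unfolding conjg_def commute_def by (simp add: inv_solve_left' m_assoc)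

lemma conjg_invol: "x \<in> carrier G \<Longrightarrow> g \<in> carrier G \<Longrightarrow> g \<otimes> g = \<one> \<Longrightarrow> conjg G (conjg G x g) g = x"
  unfolding conjg_def
  by (smt (verit) inv_closed inv_equality m_assoc m_closed r_inv r_one)

lemma conjg_eq_g: "x \<in> carrier G \<Longrightarrow> g \<in> carrier G \<Longrightarrow> conjg G x g = g \<Longrightarrow> x = g"
  unfolding conjg_def
  by (metis inv_closed inv_solve_left m_assoc m_closed r_inv r_one)

lemma invol_inv: "x \<in> carrier G \<Longrightarrow> x \<otimes> x = \<one> \<Longrightarrow> inv x = x"
  using inv_equality by blast

lemma ord3_braid:
  assumes d: "d \<in> carrier G" "d \<otimes> d = \<one>" and e: "e \<in> carrier G" "e \<otimes> e = \<one>"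
    and o: "ord (d \<otimes> e) \<in> {1,2,3}" and nc: "\<not> commute G d e"
  shows "conjg G d e = conjg G e d"
proof -
  have p: "(d \<otimes> e) [^] ord (d \<otimes> e) = \<one>" using d e pow_ord_eq_1 by simp
  have ie: "inv e = e" and id: "inv d = d" using d e invol_inv by auto
  consider "ord (d \<otimes> e) = 1" | "ord (d \<otimes> e) = 2" | "ord (d \<otimes> e) = 3" using o by auto
  then show ?thesis
  proof cases
    case 1
    then have "d \<otimes> e = \<one>" using p d e by simp
    then have "commute G d e" unfolding commute_def
      by (simp add: d(1) e(1) group.inv_comm)
    then show ?thesis using nc by simp
  next
    case 2
    then have "d \<otimes> e \<otimes> (d \<otimes> e) = \<one>" using p d e by (simp add: numeral_2_eq_2)
    then have "commute G d e" unfolding commute_def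
      by (metis d(1) e(1) id ie inv_mult_group inv_unique' m_closed)
    then show ?thesis using nc by simp
  next
    case 3
    then have "d \<otimes> e \<otimes> (d \<otimes> e) \<otimes> (d \<otimes> e) = \<one>" using p d e by (simp add: numeral_3_eq_3)
    then show ?thesis unfolding conjg_def using ie id
      by (metis (no_types, opaque_lifting) d(1) e(1) inv_solve_right local.inv_equality m_assoc m_closed)
  qed
qed



lemma setting_group: "fischer_setting G D \<Longrightarrow> group G"
  by (simp add: fischer_setting_def)

lemma setting_D:
  assumes "fischer_setting G D" "d \<in> D"
  shows "d \<in> carrier G \<and> d \<otimes>\<^bsub>G\<^esub> d = \<one>\<^bsub>G\<^esub>"
proof -
  obtain x where x: "x \<in> carrier G" "x \<otimes> x = \<one>" "D = {inv g \<otimes> x \<otimes> g | g. g \<in> carrier G}"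
    using assms(1) by (auto simp: fischer_setting_def)
  then obtain g where g: "g \<in> carrier G" "d = inv g \<otimes> x \<otimes> g" using assms(2) by auto
  have "d \<otimes> d = inv g \<otimes> (x \<otimes> x) \<otimes> g" using g x
    by (simp add: m_assoc[symmetric]) (simp add: m_assoc)
  then show ?thesis using g x by simp
qed

lemma setting_conj:
  assumes "fischer_setting G D" "d \<in> D" "e \<in> D"
  shows "conjg G d e \<in> D"
proof -
  obtain x where x: "x \<in> carrier G" "x \<otimes> x = \<one>" "D = {inv g \<otimes> x \<otimes> g | g. g \<in> carrier G}"
    using assms(1) by (auto simp: fischer_setting_def)
  then obtain g where g: "g \<in> carrier G" "d = inv g \<otimes> x \<otimes> g" using assms(2) by auto
  have e: "e \<in> carrier G" using setting_D[OF assms(1,3)] by simp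
  have "conjg G d e = inv (g \<otimes> e) \<otimes> x \<otimes> (g \<otimes> e)" using g x e
    unfolding conjg_def by (simp add: inv_mult_group m_assoc)
  then show ?thesis using x g e by auto
qed

lemma setting_braid:
  assumes "fischer_setting G D" "d \<in> D" "e \<in> D" "\<not> commute G d e"
  shows "conjg G d e = conjg G e d"
proof -
  have "ord (d \<otimes> e) \<in> {1,2,3}" using assms by (auto simp: fischer_setting_def)
  then show ?thesis using setting_D[OF assms(1,2)] setting_D[OF assms(1,3)] assms(4) ord3_braid by blast
qed

lemma setting_bp_sym:
  assumes "fischer_setting G D" "d \<in> D" "e \<in> D"
  shows "basis_prod G d e = basis_prod G e d"
  using setting_braid[OF assms] setting_braid[OF assms(1,3,2)] commute_sym[of G d e]
  unfolding basis_prod_def by auto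

lemma sum3: "a \<noteq> b \<Longrightarrow> a \<noteq> c \<Longrightarrow> b \<noteq> c \<Longrightarrow> sum f {a,b,c} = f a + f b + (f c :: bit)"
  by (simp add: add.assoc)

lemma setting_bp_sum:
  assumes "fischer_setting G D" "d \<in> D" "e \<in> D" "\<not> commute G d e"
  shows "sum f (basis_prod G d e) = f d + f e + (f (conjg G d e) :: bit)"
proof -
  have c: "d \<in> carrier G" "e \<in> carrier G" using setting_D assms by blast+
  have "d \<noteq> e" using assms(4) unfolding commute_def by auto
  moreover have "conjg G d e \<noteq> d" using conjg_self_iff c assms(4) by blast
  moreover have "conjg G d e \<noteq> e" using conjg_eq_g c \<open>d \<noteq> e\<close> by blast
  ultimately show ?thesis using assms(4) by (simp add: basis_prod_def sum3)
qed

lemma basis_identity: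
  assumes S: "fischer_setting G D" and D: "d \<in> D" "e \<in> D" "u \<in> D"
  shows "(\<Sum>x\<in>basis_prod G d e. (of_bool (\<not> commute G x u) :: bit))
       = (\<Sum>y\<in>basis_prod G e u. of_bool (\<not> commute G d y))"
proof -
  have dc: "d \<in> carrier G" "d \<otimes> d = \<one>" using setting_D[OF S D(1)] by auto
  have ec: "e \<in> carrier G" "e \<otimes> e = \<one>" using setting_D[OF S D(2)] by auto
  have uc: "u \<in> carrier G" "u \<otimes> u = \<one>" using setting_D[OF S D(3)] by auto
  note cc = commute_conjg_iff dc(1) ec(1) uc(1)
  have cs: "\<And>x y. commute G x y \<longleftrightarrow> commute G y x" by (rule commute_sym)
  show ?thesis
  proof (cases "commute G d e")
    case de: True
    show ?thesis
    proof (cases "commute G e u")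
      case True
      then show ?thesis using de by (simp add: basis_prod_def)
    next
      case eu: False
      have eu': "conjg G e u = conjg G u e" using setting_braid[OF S D(2,3) eu] .
      have dd: "conjg G d e = d" using conjg_self_iff dc ec de by blast
      have "commute G d (conjg G e u) \<longleftrightarrow> commute G d u"
        using commute_conjg_iff[of d u e] dc ec uc dd eu' by simp
      moreover have "basis_prod G d e = {}" using de by (simp add: basis_prod_def)
      ultimately show ?thesis using de eu by (simp add: setting_bp_sum[OF S D(2,3) eu])
    qed
  next
    case de: False
    have sumL: "(\<Sum>x\<in>basis_prod G d e. (of_bool (\<not> commute G x u) :: bit))
       = of_bool (\<not> commute G d u) + of_bool (\<not> commute G e u) + of_bool (\<not> commute G (conjg G d e) u)"
      by (rule setting_bp_sum[OF S D(1,2) de])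
    show ?thesis
    proof (cases "commute G e u")
      case eu: True
      have uu: "conjg G u e = u" using conjg_self_iff uc ec eu cs by blast
      have "commute G (conjg G d e) u \<longleftrightarrow> commute G d u"
        using commute_conjg_iff[of d u e] dc ec uc uu by simp
      moreover have "basis_prod G e u = {}" using eu by (simp add: basis_prod_def)
      ultimately show ?thesis using sumL eu by simp
    next
      case eu: False
      have sumR: "(\<Sum>y\<in>basis_prod G e u. (of_bool (\<not> commute G d y) :: bit))
        = of_bool (\<not> commute G d e) + of_bool (\<not> commute G d u) + of_bool (\<not> commute G d (conjg G e u))"
        by (rule setting_bp_sum[OF S D(2,3) eu])
      have key: "commute G (conjg G d e) u \<longleftrightarrow> commute G d (conjg G e u)"
      proof (cases "commute G d u")
        case du: True
        have b: "conjg G d e = conjg G e d" using setting_braid[OF S D(1,2) de] .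
        have ud: "conjg G u d = u" using conjg_self_iff uc dc du cs by blast
        have dud: "conjg G d u = d" using conjg_self_iff uc dc du by blast
        have 1: "commute G (conjg G d e) u \<longleftrightarrow> commute G e u"
          using commute_conjg_iff[of e u d] b ud dc ec uc by simp
        have 2: "commute G d (conjg G e u) \<longleftrightarrow> commute G d e"
          using commute_conjg_iff[of d e u] dud dc ec uc by simp
        show ?thesis using 1 2 de eu by simp
      next
        case du: False
        have b: "conjg G d e = conjg G e d" using setting_braid[OF S D(1,2) de] .
        have b2: "conjg G u d = conjg G d u" using setting_braid[OF S D(3,1)] du cs by blast
        have inv1: "conjg G (conjg G u d) d = u" using conjg_invol uc dc by blast
        have inv2: "conjg G (conjg G d u) u = d" using conjg_invol uc dc by blast
        have "commute G (conjg G d e) u \<longleftrightarrow> commute G (conjg G e d) (conjg G (conjg G u d) d)"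
          using b inv1 by simp
        also have "\<dots> \<longleftrightarrow> commute G e (conjg G u d)"
          using commute_conjg_iff[of e "conjg G u d" d] dc ec uc by simp
        also have "\<dots> \<longleftrightarrow> commute G e (conjg G d u)" using b2 by simp
        also have "\<dots> \<longleftrightarrow> commute G (conjg G e u) (conjg G (conjg G d u) u)"
          using commute_conjg_iff[of e "conjg G d u" u] dc ec uc by simp
        also have "\<dots> \<longleftrightarrow> commute G d (conjg G e u)" using inv2 cs by simp
        finally show ?thesis .
      qed
      show ?thesis using sumL sumR key de eu by simp
    qed
  qed
qed

end

definition alg_ok :: "'b f2alg \<Rightarrow> bool" where
  "alg_ok A \<longleftrightarrow> azero A \<in> acar A \<and>
    (\<forall>x\<in>acar A. \<forall>y\<in>acar A. aadd A x y \<in> acar A \<and> amul A x y \<in> acar A) \<and>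
    (\<forall>x\<in>acar A. \<forall>y\<in>acar A. \<forall>z\<in>acar A. aadd A (aadd A x y) z = aadd A x (aadd A y z)) \<and>
    (\<forall>x\<in>acar A. \<forall>y\<in>acar A. aadd A x y = aadd A y x) \<and>
    (\<forall>x\<in>acar A. aadd A (azero A) x = x) \<and>
    (\<forall>x\<in>acar A. aadd A x x = azero A) \<and>
    (\<forall>x\<in>acar A. \<forall>y\<in>acar A. \<forall>z\<in>acar A.
        amul A (aadd A x y) z = aadd A (amul A x z) (amul A y z) \<and>
        amul A x (aadd A y z) = aadd A (amul A x y) (amul A x z))"

lemma restrict_alg_simps[simp]:
  "acar (restrict_alg A B) = B" "aadd (restrict_alg A B) = aadd A"
  "amul (restrict_alg A B) = amul A" "azero (restrict_alg A B) = azero A"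
  by (simp_all add: restrict_alg_def)

lemma restrict_ok: "alg_ok A \<Longrightarrow> subalgebra B A \<Longrightarrow> alg_ok (restrict_alg A B)"
  unfolding alg_ok_def subalgebra_def restrict_alg_simps by (meson subsetD)

locale qctx =
  fixes A :: "'b f2alg" and I :: "'b set"
  assumes ok: "alg_ok A" and idl: "alg_ideal I A"
begin

lemmas okc = ok[unfolded alg_ok_def]
lemma zero_car: "azero A \<in> acar A" by (rule okc[THEN conjunct1])
lemma add_car: assumes x: "x \<in> acar A" and y: "y \<in> acar A" shows "aadd A x y \<in> acar A"
  using okc[THEN conjunct2, THEN conjunct1, rule_format, OF x y] by (rule conjunct1)
lemma mul_car: assumes x: "x \<in> acar A" and y: "y \<in> acar A" shows "amul A x y \<in> acar A"
  using okc[THEN conjunct2, THEN conjunct1, rule_format, OF x y] by (rule conjunct2)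
lemma add_assoc: assumes x: "x \<in> acar A" and y: "y \<in> acar A" and z: "z \<in> acar A"
  shows "aadd A (aadd A x y) z = aadd A x (aadd A y z)"
  by (rule okc[THEN conjunct2, THEN conjunct2, THEN conjunct1, rule_format, OF x y z])
lemma add_comm: assumes x: "x \<in> acar A" and y: "y \<in> acar A" shows "aadd A x y = aadd A y x"
  by (rule okc[THEN conjunct2, THEN conjunct2, THEN conjunct2, THEN conjunct1, rule_format, OF x y])
lemma add_zero: assumes x: "x \<in> acar A" shows "aadd A (azero A) x = x"
  by (rule okc[THEN conjunct2, THEN conjunct2, THEN conjunct2, THEN conjunct2, THEN conjunct1, rule_format, OF x])
lemma add_zero_r: "x \<in> acar A \<Longrightarrow> aadd A x (azero A) = x"
  using add_comm[of x "azero A"] add_zero zero_car by simp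
lemma add_self: assumes x: "x \<in> acar A" shows "aadd A x x = azero A"
  by (rule okc[THEN conjunct2, THEN conjunct2, THEN conjunct2, THEN conjunct2, THEN conjunct2, THEN conjunct1, rule_format, OF x])
lemma distl: assumes x: "x \<in> acar A" and y: "y \<in> acar A" and z: "z \<in> acar A"
  shows "amul A (aadd A x y) z = aadd A (amul A x z) (amul A y z)"
  using okc[THEN conjunct2, THEN conjunct2, THEN conjunct2, THEN conjunct2, THEN conjunct2, THEN conjunct2, rule_format, OF x y z] by (rule conjunct1)
lemma distr: assumes x: "x \<in> acar A" and y: "y \<in> acar A" and z: "z \<in> acar A"
  shows "amul A x (aadd A y z) = aadd A (amul A x y) (amul A x z)"
  using okc[THEN conjunct2, THEN conjunct2, THEN conjunct2, THEN conjunct2, THEN conjunct2, THEN conjunct2, rule_format, OF x y z] by (rule conjunct2)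

lemma I_car: "i \<in> I \<Longrightarrow> i \<in> acar A" using idl by (auto simp: alg_ideal_def)
lemma I_zero: "azero A \<in> I" using idl by (auto simp: alg_ideal_def)
lemma I_add: "i \<in> I \<Longrightarrow> j \<in> I \<Longrightarrow> aadd A i j \<in> I" using idl by (auto simp: alg_ideal_def)
lemma I_mul: "i \<in> I \<Longrightarrow> a \<in> acar A \<Longrightarrow> amul A a i \<in> I \<and> amul A i a \<in> I" using idl by (auto simp: alg_ideal_def)

lemma add_cancel: "x \<in> acar A \<Longrightarrow> y \<in> acar A \<Longrightarrow> aadd A x (aadd A x y) = y"
proof -
  assume xy: "x \<in> acar A" "y \<in> acar A"
  then have "aadd A x (aadd A x y) = aadd A (aadd A x x) y" by (simp add: add_assoc)
  then show ?thesis using xy by (simp add: add_self add_zero)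
qed

lemma swap4:
  assumes "a \<in> acar A" "b \<in> acar A" "c \<in> acar A" "d \<in> acar A"
  shows "aadd A (aadd A a b) (aadd A c d) = aadd A (aadd A a c) (aadd A b d)"
proof -
  have "aadd A (aadd A a b) (aadd A c d) = aadd A a (aadd A b (aadd A c d))"
    using assms by (intro add_assoc add_car)
  also have "aadd A b (aadd A c d) = aadd A (aadd A b c) d" using assms by (intro add_assoc[symmetric])
  also have "aadd A b c = aadd A c b" using assms by (intro add_comm)
  also have "aadd A (aadd A c b) d = aadd A c (aadd A b d)" using assms by (intro add_assoc)
  also have "aadd A a (aadd A c (aadd A b d)) = aadd A (aadd A a c) (aadd A b d)"
    using assms by (intro add_assoc[symmetric] add_car)
  finally show ?thesis .
qed

lemma mem_coset: "x \<in> acar A \<Longrightarrow> x \<in> coset A I x"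
  unfolding coset_def using I_zero add_zero_r by force

lemma in_coset: "x \<in> acar A \<Longrightarrow> z \<in> coset A I x \<Longrightarrow> z \<in> acar A \<and> aadd A x z \<in> I"
  unfolding coset_def using add_car I_car add_cancel by auto

lemma coset_sub: 
  assumes "x \<in> acar A" "y \<in> acar A" "aadd A x y \<in> I"
  shows "coset A I y \<subseteq> coset A I x"
proof
  fix z assume "z \<in> coset A I y"
  then obtain i where i: "i \<in> I" "z = aadd A y i" by (auto simp: coset_def)
  have "aadd A x (aadd A (aadd A x y) i) = aadd A (aadd A x (aadd A x y)) i"
    using assms i by (simp add: add_assoc I_car add_car)
  also have "\<dots> = z" using add_cancel assms i by simp
  finally show "z \<in> coset A I x" using I_add[OF assms(3) i(1)] unfolding coset_def by force
qed

lemma coset_eq: "x \<in> acar A \<Longrightarrow> y \<in> acar A \<Longrightarrow> coset A I x = coset A I y \<longleftrightarrow> aadd A x y \<in> I"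
proof
  assume x: "x \<in> acar A" and y: "y \<in> acar A"
  {
    assume "coset A I x = coset A I y"
    then have "y \<in> coset A I x" using mem_coset[OF y] by simp
    then show "aadd A x y \<in> I" using in_coset[OF x] by blast
  }
  {
    assume a: "aadd A x y \<in> I"
    moreover have "aadd A y x \<in> I" using a add_comm x y by simp
    ultimately show "coset A I x = coset A I y" using coset_sub x y by blast
  }
qed

lemma coset_add_I: "b \<in> acar A \<Longrightarrow> r \<in> I \<Longrightarrow> coset A I (aadd A b r) = coset A I b"
proof -
  assume b: "b \<in> acar A" and r: "r \<in> I"
  have rc: "r \<in> acar A" using I_car r by blast
  have "aadd A (aadd A b r) b = aadd A b (aadd A b r)" using add_comm b rc add_car by blast
  also have "\<dots> = r" using add_cancel b rc by blast
  finally show ?thesis using coset_eq[OF add_car[OF b rc] b] r by simp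
qed

lemma rep:
  assumes "x \<in> acar A"
  shows "(SOME z. z \<in> coset A I x) \<in> acar A \<and> aadd A x (SOME z. z \<in> coset A I x) \<in> I"
  using in_coset[OF assms] someI[of "\<lambda>z. z \<in> coset A I x", OF mem_coset[OF assms]] by blast

lemma quot_add:
  assumes x: "x \<in> acar A" and y: "y \<in> acar A"
  shows "aadd (quot_alg A I) (coset A I x) (coset A I y) = coset A I (aadd A x y)"
proof -
  define x' where "x' = (SOME z. z \<in> coset A I x)"
  define y' where "y' = (SOME z. z \<in> coset A I y)"
  have x': "x' \<in> acar A" "aadd A x x' \<in> I" using rep[OF x] by (simp_all add: x'_def)
  have y': "y' \<in> acar A" "aadd A y y' \<in> I" using rep[OF y] by (simp_all add: y'_def)
  define i where "i = aadd A x x'"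
  define j where "j = aadd A y y'"
  have i: "i \<in> I" "i \<in> acar A" and j: "j \<in> I" "j \<in> acar A" using x' y' I_car by (auto simp: i_def j_def)
  have "x' = aadd A x i" using add_cancel x x' by (simp add: i_def)
  moreover have "y' = aadd A y j" using add_cancel y y' by (simp add: j_def)
  ultimately have "aadd A x' y' = aadd A (aadd A x y) (aadd A i j)"
    using swap4[OF x i(2) y j(2)] by simp
  then have "coset A I (aadd A x' y') = coset A I (aadd A x y)"
    using coset_add_I[OF add_car[OF x y] I_add[OF i(1) j(1)]] by simp
  then show ?thesis by (simp add: quot_alg_def x'_def y'_def)
qed

lemma quot_mul:
  assumes x: "x \<in> acar A" and y: "y \<in> acar A"
  shows "amul (quot_alg A I) (coset A I x) (coset A I y) = coset A I (amul A x y)"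
proof -
  define x' where "x' = (SOME z. z \<in> coset A I x)"
  define y' where "y' = (SOME z. z \<in> coset A I y)"
  have x': "x' \<in> acar A" "aadd A x x' \<in> I" using rep[OF x] by (simp_all add: x'_def)
  have y': "y' \<in> acar A" "aadd A y y' \<in> I" using rep[OF y] by (simp_all add: y'_def)
  define i where "i = aadd A x x'"
  define j where "j = aadd A y y'"
  have i: "i \<in> I" "i \<in> acar A" and j: "j \<in> I" "j \<in> acar A" using x' y' I_car by (auto simp: i_def j_def)
  have xe: "x' = aadd A x i" using add_cancel x x' by (simp add: i_def)
  have ye: "y' = aadd A y j" using add_cancel y y' by (simp add: j_def)
  have "amul A x' y' = aadd A (amul A x (aadd A y j)) (amul A i (aadd A y j))"
    unfolding xe ye by (rule distl[OF x i(2) add_car[OF y j(2)]])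
  also have "\<dots> = aadd A (aadd A (amul A x y) (amul A x j)) (aadd A (amul A i y) (amul A i j))"
    by (simp only: distr[OF x y j(2)] distr[OF i(2) y j(2)])
  also have "\<dots> = aadd A (amul A x y) (aadd A (amul A x j) (aadd A (amul A i y) (amul A i j)))"
    using x y i j by (intro add_assoc mul_car add_car)
  finally have e: "amul A x' y' = aadd A (amul A x y) (aadd A (amul A x j) (aadd A (amul A i y) (amul A i j)))" .
  have r: "aadd A (amul A x j) (aadd A (amul A i y) (amul A i j)) \<in> I"
    using I_mul I_add i j x y by simp
  have "coset A I (amul A x' y') = coset A I (amul A x y)"
    unfolding e using coset_add_I[OF mul_car[OF x y] r] .
  then show ?thesis by (simp add: quot_alg_def x'_def y'_def)
qed

lemma quot_car: "acar (quot_alg A I) = coset A I ` acar A"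
  by (simp add: quot_alg_def)
lemma quot_zero: "azero (quot_alg A I) = coset A I (azero A)"
  by (simp add: quot_alg_def)

lemma quot_ok: "alg_ok (quot_alg A I)"
proof -
  let ?C = "coset A I"
  have ex: "\<exists>x\<in>acar A. X = ?C x" if "X \<in> acar (quot_alg A I)" for X
    using that unfolding quot_car by (rule imageE) blast
  have im: "?C x \<in> acar (quot_alg A I)" if "x \<in> acar A" for x
    using that quot_car by auto
  show ?thesis unfolding alg_ok_def
  proof (intro conjI ballI)
    show "azero (quot_alg A I) \<in> acar (quot_alg A I)" using quot_zero im zero_car by simp
  next
    fix X Y assume hX: "X \<in> acar (quot_alg A I)" and hY: "Y \<in> acar (quot_alg A I)"
    obtain x where x: "x \<in> acar A" "X = ?C x" using ex[OF hX] by blast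
    obtain y where y: "y \<in> acar A" "Y = ?C y" using ex[OF hY] by blast
    show "aadd (quot_alg A I) X Y \<in> acar (quot_alg A I)"
      using x y by (simp add: quot_add im add_car)
    show "amul (quot_alg A I) X Y \<in> acar (quot_alg A I)"
      using x y by (simp add: quot_mul im mul_car)
    show "aadd (quot_alg A I) X Y = aadd (quot_alg A I) Y X"
      using x y by (simp add: quot_add add_comm[OF x(1) y(1)])
  next
    fix X Y Z assume hX: "X \<in> acar (quot_alg A I)" and hY: "Y \<in> acar (quot_alg A I)" and hZ: "Z \<in> acar (quot_alg A I)"
    obtain x where x: "x \<in> acar A" "X = ?C x" using ex[OF hX] by blast
    obtain y where y: "y \<in> acar A" "Y = ?C y" using ex[OF hY] by blast
    obtain z where z: "z \<in> acar A" "Z = ?C z" using ex[OF hZ] by blast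
    show "aadd (quot_alg A I) (aadd (quot_alg A I) X Y) Z = aadd (quot_alg A I) X (aadd (quot_alg A I) Y Z)"
      using x y z by (simp only: quot_add add_car add_assoc)
    show "amul (quot_alg A I) (aadd (quot_alg A I) X Y) Z = aadd (quot_alg A I) (amul (quot_alg A I) X Z) (amul (quot_alg A I) Y Z)"
      using x y z by (simp only: quot_add quot_mul add_car mul_car distl)
    show "amul (quot_alg A I) X (aadd (quot_alg A I) Y Z) = aadd (quot_alg A I) (amul (quot_alg A I) X Y) (amul (quot_alg A I) X Z)"
      using x y z by (simp only: quot_add quot_mul add_car mul_car distr)
  next
    fix X assume hX: "X \<in> acar (quot_alg A I)"
    obtain x where x: "x \<in> acar A" "X = ?C x" using ex[OF hX] by blast
    show "aadd (quot_alg A I) (azero (quot_alg A I)) X = X"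
      using x by (simp only: quot_zero quot_add zero_car add_zero)
    show "aadd (quot_alg A I) X X = azero (quot_alg A I)"
      using x by (simp only: quot_zero quot_add add_self)
  qed
qed

end

lemma iso_from_proj:
  assumes s1: "p1 ` S = acar A1" and s2: "p2 ` S = acar A2"
    and eqv: "\<And>x y. x \<in> S \<Longrightarrow> y \<in> S \<Longrightarrow> p1 x = p1 y \<longleftrightarrow> p2 x = p2 y"
    and cl: "\<And>x y. x \<in> S \<Longrightarrow> y \<in> S \<Longrightarrow> ad x y \<in> S \<and> mu x y \<in> S"
    and h1: "\<And>x y. x \<in> S \<Longrightarrow> y \<in> S \<Longrightarrow> p1 (ad x y) = aadd A1 (p1 x) (p1 y) \<and> p1 (mu x y) = amul A1 (p1 x) (p1 y)"
    and h2: "\<And>x y. x \<in> S \<Longrightarrow> y \<in> S \<Longrightarrow> p2 (ad x y) = aadd A2 (p2 x) (p2 y) \<and> p2 (mu x y) = amul A2 (p2 x) (p2 y)"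
  shows "alg_iso A1 A2"
proof -
  define r where "r z = (SOME x. x \<in> S \<and> p1 x = z)" for z
  have r: "r z \<in> S \<and> p1 (r z) = z" if zA: "z \<in> acar A1" for z
  proof -
    have "z \<in> p1 ` S" using zA s1 by simp
    then obtain x where "x \<in> S" "z = p1 x" by (rule imageE)
    then have "x \<in> S" "p1 x = z" by simp_all
    then show ?thesis unfolding r_def by (rule someI[of "\<lambda>x. x \<in> S \<and> p1 x = z", OF conjI])
  qed
  define f where "f z = p2 (r z)" for z
  have fp: "f (p1 x) = p2 x" if "x \<in> S" for x
  proof -
    have "p1 x \<in> acar A1" unfolding s1[symmetric] using that by (rule imageI)
    then have rr: "r (p1 x) \<in> S \<and> p1 (r (p1 x)) = p1 x" by (rule r)
    have "p2 (r (p1 x)) = p2 x" using eqv[OF conjunct1[OF rr] that] conjunct2[OF rr] by simp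
    then show ?thesis unfolding f_def .
  qed
  have "bij_betw f (acar A1) (acar A2)"
  proof (rule bij_betw_imageI)
    show "inj_on f (acar A1)"
    proof (rule inj_onI)
      fix z w assume z: "z \<in> acar A1" and w: "w \<in> acar A1" and e: "f z = f w"
      have "p2 (r z) = p2 (r w)" using e unfolding f_def .
      then have "p1 (r z) = p1 (r w)" using eqv[OF conjunct1[OF r[OF z]] conjunct1[OF r[OF w]]] by simp
      then show "z = w" using r[OF z] r[OF w] by simp
    qed
    show "f ` acar A1 = acar A2"
      unfolding s1[symmetric] s2[symmetric] image_image using fp by (simp cong: image_cong)
  qed
  moreover have "\<forall>z\<in>acar A1. \<forall>w\<in>acar A1. f (aadd A1 z w) = aadd A2 (f z) (f w) \<and>
                               f (amul A1 z w) = amul A2 (f z) (f w)"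
  proof (intro ballI)
    fix z w assume z: "z \<in> acar A1" and w: "w \<in> acar A1"
    have "z \<in> p1 ` S" "w \<in> p1 ` S" using z w s1 by simp_all
    then obtain x y where x: "x \<in> S" "z = p1 x" and y: "y \<in> S" "w = p1 y" by (auto elim!: imageE)
    have "f (aadd A1 z w) = f (p1 (ad x y))" using h1[OF x(1) y(1)] x y by simp
    also have "\<dots> = p2 (ad x y)" using fp cl[OF x(1) y(1)] by blast
    also have "\<dots> = aadd A2 (f z) (f w)" using h2[OF x(1) y(1)] fp x y by simp
    finally have 1: "f (aadd A1 z w) = aadd A2 (f z) (f w)" .
    have "f (amul A1 z w) = f (p1 (mu x y))" using h1[OF x(1) y(1)] x y by simp
    also have "\<dots> = p2 (mu x y)" using fp cl[OF x(1) y(1)] by blast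
    also have "\<dots> = amul A2 (f z) (f w)" using h2[OF x(1) y(1)] fp x y by simp
    finally have 2: "f (amul A1 z w) = amul A2 (f z) (f w)" .
    show "f (aadd A1 z w) = aadd A2 (f z) (f w) \<and> f (amul A1 z w) = amul A2 (f z) (f w)"
      using 1 2 by blast
  qed
  ultimately show ?thesis unfolding alg_iso_def by blast
qed

lemma fa_simps[simp]: "acar (fischer_alg G X) = {S. S \<subseteq> X \<and> finite S}"
  "aadd (fischer_alg G X) = symdiff" "amul (fischer_alg G X) = fprod G" "azero (fischer_alg G X) = {}"
  by (simp_all add: fischer_alg_def)

lemma finite_symdiff[simp]: "finite A \<Longrightarrow> finite B \<Longrightarrow> finite (symdiff A B)"
  by (simp add: symdiff_def)

lemma symdiff_sub: "A \<subseteq> X \<Longrightarrow> B \<subseteq> X \<Longrightarrow> symdiff A B \<subseteq> X"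
  by (auto simp: symdiff_def)

lemma fprod_in:
  assumes S: "fischer_setting G D" and X: "X \<subseteq> D" "\<forall>d\<in>X. \<forall>e\<in>X. conjg G d e \<in> X"
    and "A \<subseteq> X" "B \<subseteq> X"
  shows "fprod G A B \<subseteq> X"
proof -
  have "basis_prod G d e \<subseteq> X" if "d \<in> A" "e \<in> B" for d e
  proof -
    have de: "d \<in> X" "e \<in> X" using that assms(4,5) by auto
    then have "conjg G d e \<in> X" using X(2) by blast
    then show ?thesis using de by (auto simp: basis_prod_def)
  qed
  then show ?thesis using fprod_sub[of G A B] by blast
qed

lemma fa_ok:
  assumes S: "fischer_setting G D" and X: "X \<subseteq> D" "\<forall>d\<in>X. \<forall>e\<in>X. conjg G d e \<in> X"
  shows "alg_ok (fischer_alg G X)"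
  unfolding alg_ok_def fa_simps
  apply (intro conjI)
  apply simp
  using fprod_in[OF S X] apply (auto simp: symdiff_sub)[1]
  apply (auto simp: symdiff_def)[1]
  apply (auto simp: symdiff_def)[1]
  apply (auto simp: symdiff_def)[1]
  apply (auto simp: symdiff_def)[1]
  apply (auto simp: fprod_symdiff_left fprod_symdiff_right)
  done

lemma rad_ideal:
  assumes S: "fischer_setting G D" and X: "X \<subseteq> D" "\<forall>d\<in>X. \<forall>e\<in>X. conjg G d e \<in> X"
  shows "alg_ideal (fischer_rad G X) (fischer_alg G X)"
proof -
  have grp: "group G" using S by (simp add: fischer_setting_def)
  have bi: "(\<Sum>x\<in>basis_prod G d e. (of_bool (\<not> commute G x u) :: bit))
       = (\<Sum>y\<in>basis_prod G e u. of_bool (\<not> commute G d y))" if "d \<in> X" "e \<in> X" "u \<in> X" for d e u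
    using group.basis_identity[OF grp S] X(1) that by blast
  have prodrad: "fprod G v a \<in> fischer_rad G X"
    if v: "v \<in> fischer_rad G X" and a: "a \<in> acar (fischer_alg G X)" for v a
  proof -
    have v': "v \<subseteq> X" "finite v" "\<forall>T\<in>acar (fischer_alg G X). \<not> fform G v T"
      using v by (auto simp: fischer_rad_def)
    have a': "a \<subseteq> X" "finite a" using a by auto
    have "\<not> fform G (fprod G v a) T" if T: "T \<in> acar (fischer_alg G X)" for T
    proof -
      have T': "T \<subseteq> X" "finite T" using T by auto
      have "fform G (fprod G v a) T \<longleftrightarrow> fform G v (fprod G a T)"
        by (rule fform_assoc) (use v' a' T' in \<open>auto intro!: bi\<close>)
      moreover have "fprod G a T \<in> acar (fischer_alg G X)"
        using fprod_in[OF S X a'(1) T'(1)] a' T' by simp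
      ultimately show ?thesis using v'(3) by blast
    qed
    moreover have "fprod G v a \<in> acar (fischer_alg G X)"
      using fprod_in[OF S X v'(1) a'(1)] a' v' by simp
    ultimately show ?thesis by (simp add: fischer_rad_def)
  qed
  have comm: "fprod G a v = fprod G v a" if "v \<subseteq> X" "finite v" "a \<subseteq> X" "finite a" for v a
  proof (rule fprod_comm)
    fix d e assume "d \<in> a" "e \<in> v"
    then have "d \<in> D" "e \<in> D" using that X(1) by auto
    then show "basis_prod G d e = basis_prod G e d" by (rule group.setting_bp_sym[OF grp S])
  qed (use that in auto)
  show ?thesis
    unfolding alg_ideal_def
  proof (intro conjI ballI)
    show "fischer_rad G X \<subseteq> acar (fischer_alg G X)" by (auto simp: fischer_rad_def)
    show "azero (fischer_alg G X) \<in> fischer_rad G X" by (simp add: fischer_rad_def fform_def)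
    fix x y assume x: "x \<in> fischer_rad G X" and y: "y \<in> fischer_rad G X"
    then show "aadd (fischer_alg G X) x y \<in> fischer_rad G X"
      by (auto simp: fischer_rad_def fform_symdiff_left symdiff_sub)
  next
    fix x a assume x: "x \<in> fischer_rad G X" and a: "a \<in> acar (fischer_alg G X)"
    show "amul (fischer_alg G X) x a \<in> fischer_rad G X" using prodrad[OF x a] by simp
    show "amul (fischer_alg G X) a x \<in> fischer_rad G X" using prodrad[OF x a] comm x a
      by (auto simp: fischer_rad_def)
  qed
qed

theorem lemma2p8:
  fixes G :: "('g, 'm) monoid_scheme" and D E :: "'g set"
  assumes "fischer_setting G D"
    and "E \<subseteq> D"
    and "\<forall>d\<in>E. \<forall>e\<in>E. conjg G d e \<in> E"
  shows "\<exists>B I. subalgebra B (quot_alg (fischer_alg G D) (fischer_rad G D)) \<and>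
           alg_ideal I (restrict_alg (quot_alg (fischer_alg G D) (fischer_rad G D)) B) \<and>
           alg_iso (quot_alg (restrict_alg (quot_alg (fischer_alg G D) (fischer_rad G D)) B) I)
                   (quot_alg (fischer_alg G E) (fischer_rad G E))"
proof -
  have grp: "group G" using assms(1) by (simp add: fischer_setting_def)
  have Dcl: "\<forall>d\<in>D. \<forall>e\<in>D. conjg G d e \<in> D" using group.setting_conj[OF grp assms(1)] by blast
  define A where "A = fischer_alg G D"
  define V where "V = fischer_rad G D"
  define AE where "AE = fischer_alg G E"
  define VE where "VE = fischer_rad G E"
  have okA: "alg_ok A" unfolding A_def by (rule fa_ok[OF assms(1) subset_refl Dcl])
  have idA: "alg_ideal V A" unfolding A_def V_def by (rule rad_ideal[OF assms(1) subset_refl Dcl])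
  have okE: "alg_ok AE" unfolding AE_def by (rule fa_ok[OF assms(1) assms(2,3)])
  have idE: "alg_ideal VE AE" unfolding AE_def VE_def by (rule rad_ideal[OF assms(1) assms(2,3)])
  interpret qA: qctx A V using okA idA by (rule qctx.intro)
  interpret qE: qctx AE VE using okE idE by (rule qctx.intro)
  have carE: "acar AE \<subseteq> acar A" using assms(2) by (auto simp: A_def AE_def)
  have opsE: "aadd AE = aadd A" "amul AE = amul A" "azero AE = azero A" by (simp_all add: A_def AE_def)
  define Q where "Q = quot_alg A V"
  define B where "B = coset A V ` acar AE"
  have cB: "coset A V x \<in> B" if "x \<in> acar AE" for x using that by (simp add: B_def)
  have Qadd: "aadd Q (coset A V x) (coset A V y) = coset A V (aadd AE x y)"
    if "x \<in> acar AE" "y \<in> acar AE" for x y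
    unfolding Q_def opsE using qA.quot_add that carE by blast
  have Qmul: "amul Q (coset A V x) (coset A V y) = coset A V (amul AE x y)"
    if "x \<in> acar AE" "y \<in> acar AE" for x y
    unfolding Q_def opsE using qA.quot_mul that carE by blast
  have subB: "subalgebra B Q"
    unfolding subalgebra_def
  proof (intro conjI ballI)
    show "B \<subseteq> acar Q" using carE by (auto simp: B_def Q_def qA.quot_car)
    show "azero Q \<in> B" unfolding Q_def qA.quot_zero opsE(3)[symmetric] using cB qE.zero_car by blast
  next
    fix x y assume x: "x \<in> B" and y: "y \<in> B"
    obtain s where s: "s \<in> acar AE" "x = coset A V s" using x B_def by blast
    obtain t where t: "t \<in> acar AE" "y = coset A V t" using y B_def by blast
    show "aadd Q x y \<in> B" using s t Qadd cB qE.add_car by simp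
    show "amul Q x y \<in> B" using s t Qmul cB qE.mul_car by simp
  qed
  define R where "R = restrict_alg Q B"
  have okR: "alg_ok R" unfolding R_def Q_def using restrict_ok[OF qA.quot_ok] subB Q_def by simp
  have carR: "acar R = B" and opsR: "aadd R = aadd Q" "amul R = amul Q" "azero R = azero Q"
    by (simp_all add: R_def)
  define I where "I = coset A V ` VE"
  have idI: "alg_ideal I R"
    unfolding alg_ideal_def
  proof (intro conjI ballI)
    show "I \<subseteq> acar R" unfolding carR I_def B_def using qE.I_car by auto
    show "azero R \<in> I" unfolding opsR Q_def qA.quot_zero I_def opsE(3)[symmetric] using qE.I_zero by blast
  next
    fix x y assume x: "x \<in> I" and y: "y \<in> I"
    obtain s where s: "s \<in> VE" "x = coset A V s" using x I_def by blast
    obtain t where t: "t \<in> VE" "y = coset A V t" using y I_def by blast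
    show "aadd R x y \<in> I" unfolding opsR using s t Qadd qE.I_car qE.I_add I_def by simp
  next
    fix x a assume x: "x \<in> I" and a: "a \<in> acar R"
    obtain s where s: "s \<in> VE" "x = coset A V s" using x I_def by blast
    obtain t where t: "t \<in> acar AE" "a = coset A V t" using a carR B_def by blast
    show "amul R a x \<in> I" unfolding opsR using s t Qmul qE.I_car qE.I_mul I_def by simp
    show "amul R x a \<in> I" unfolding opsR using s t Qmul qE.I_car qE.I_mul I_def by simp
  qed
  interpret qR: qctx R I using okR idI by (rule qctx.intro)
  have radsub: "w \<in> VE" if "w \<in> V" "w \<in> acar AE" for w
    using that carE unfolding V_def VE_def fischer_rad_def A_def[symmetric] AE_def[symmetric] by blast
  have key: "coset A V w \<in> I \<longleftrightarrow> w \<in> VE" if w: "w \<in> acar AE" for w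
  proof
    assume "w \<in> VE" then show "coset A V w \<in> I" by (simp add: I_def)
  next
    assume "coset A V w \<in> I"
    then obtain s where s: "s \<in> VE" "coset A V w = coset A V s" by (auto simp: I_def)
    have sE: "s \<in> acar AE" using qE.I_car s(1) by blast
    have "aadd A w s \<in> V" using qA.coset_eq s(2) w sE carE by blast
    moreover have "aadd A w s \<in> acar AE" using qE.add_car[OF w sE] opsE by simp
    ultimately have ws: "aadd AE w s \<in> VE" using radsub opsE by simp
    have "aadd AE (aadd AE w s) s = w"
      using qE.add_assoc[OF w sE sE] qE.add_self[OF sE] qE.add_zero_r[OF w] by simp
    then show "w \<in> VE" using qE.I_add[OF ws s(1)] by simp
  qed
  have iso: "alg_iso (quot_alg R I) (quot_alg AE VE)"
  proof (rule iso_from_proj[where S = "acar AE" and ?p1.0 = "\<lambda>s. coset R I (coset A V s)"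
        and ?p2.0 = "coset AE VE" and ad = "aadd AE" and mu = "amul AE"])
    show "(\<lambda>s. coset R I (coset A V s)) ` acar AE = acar (quot_alg R I)"
      by (simp add: qR.quot_car carR B_def image_image)
    show "coset AE VE ` acar AE = acar (quot_alg AE VE)" by (simp add: qE.quot_car)
  next
    fix x y assume x: "x \<in> acar AE" and y: "y \<in> acar AE"
    have "coset R I (coset A V x) = coset R I (coset A V y) \<longleftrightarrow> aadd R (coset A V x) (coset A V y) \<in> I"
      using qR.coset_eq cB x y carR by blast
    also have "\<dots> \<longleftrightarrow> aadd AE x y \<in> VE" unfolding opsR using Qadd[OF x y] key qE.add_car[OF x y] by simp
    also have "\<dots> \<longleftrightarrow> coset AE VE x = coset AE VE y" using qE.coset_eq[OF x y] by simp
    finally show "coset R I (coset A V x) = coset R I (coset A V y) \<longleftrightarrow> coset AE VE x = coset AE VE y" .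
    show "aadd AE x y \<in> acar AE \<and> amul AE x y \<in> acar AE" using qE.add_car[OF x y] qE.mul_car[OF x y] by blast
    have cx: "coset A V x \<in> acar R" and cy: "coset A V y \<in> acar R" using cB x y carR by auto
    show "coset R I (coset A V (aadd AE x y)) = aadd (quot_alg R I) (coset R I (coset A V x)) (coset R I (coset A V y)) \<and>
          coset R I (coset A V (amul AE x y)) = amul (quot_alg R I) (coset R I (coset A V x)) (coset R I (coset A V y))"
      using qR.quot_add[OF cx cy] qR.quot_mul[OF cx cy] Qadd[OF x y] Qmul[OF x y] opsR by simp
    show "coset AE VE (aadd AE x y) = aadd (quot_alg AE VE) (coset AE VE x) (coset AE VE y) \<and>
          coset AE VE (amul AE x y) = amul (quot_alg AE VE) (coset AE VE x) (coset AE VE y)"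
      using qE.quot_add[OF x y] qE.quot_mul[OF x y] by simp
  qed
  show ?thesis
    using subB idI iso unfolding R_def Q_def A_def V_def AE_def VE_def by blast
qed


end
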